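(* Let $(\mathbb{X},d,\mu)$ be a proper metric measure space satisfying the $\delta$-annular decay property for some $\delta\in(0,1]$. Suppose there is $\gamma\in(0,1]$ such that $\varrho$ is a $\gamma$-H\"older continuous admissible radius function in a bounded domain $\Omega\subset\mathbb{X}$. Then every $u\in L^\infty(\Omega)$ with $\mathcal{M}u=u$ in $\Omega$ is locally $\gamma\delta$-H\"older continuous in $\Omega$. In particular, if $\delta=\gamma=1$ then $u$ is locally Lipschitz continuous in $\Omega$.
   Context: A metric space is proper if closed bounded sets are compact. A metric measure space $(\mathbb{X},d,\mu)$ is a metric space with a positive Borel regular measure $\mu$ with $0<\mu(B)<\infty$ for every ball $B$. It satisfies the $\delta$-annular decay property ($\delta\in(0,1]$) if there is $D_\delta\geq1$ with $\mu(B(x,R)\setminus B(x,r))\leq D_\delta\left(\frac{R-r}{R}\right)^\delta\mu(B(x,R))$ for all $x\in\mathbb{X}$, $0<r\leq R$. An admissible radius function in $\Omega$ is a function $\varrho\in C(\overline\Omega)$, $\varrho\ge0$, with $0<\varrho(x)\leq\mathrm{dist}(x,\partial\Omega)$ for $x\in\Omega$ and $\varrho(x)=0$ iff $x\in\partial\Omega$; it is $\gamma$-H\"older continuous if $|\varrho(x)-\varrho(y)|\le L\,d(x,y)^\gamma$ for some $L>0$. For $x\in\Omega$ let $B_x=\overline{B}(x,\varrho(x))$ and $\mathcal{M}u(x)=\frac{1}{\mu(B_x)}\int_{B_x}u\,d\mu$. Locally $\theta$-H\"older continuous in $\Omega$ means: for every compact $K\subset\Omega$ there is $C$ with $|u(x)-u(y)|\leq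 C\,d(x,y)^\theta$ for all $x,y\in K$. *)

theory Defs
  imports "HOL-Analysis.Analysis"
begin

definition proper_space :: "'a::metric_space itself \<Rightarrow> bool" where
  "proper_space _ \<longleftrightarrow> (\<forall>S::'a set. closed S \<and> bounded S \<longrightarrow> compact S)"

definition metric_measure_space :: "'a::metric_space measure \<Rightarrow> bool" where
  "metric_measure_space \<mu> \<longleftrightarrow> sets \<mu> = sets borel \<and>
     (\<forall>x r. 0 < r \<longrightarrow> 0 < emeasure \<mu> (ball x r) \<and> emeasure \<mu> (ball x r) < \<infinity>)"

definition annular_decay :: "'a::metric_space measure \<Rightarrow> real \<Rightarrow> bool" where
  "annular_decay \<mu> \<delta> \<longleftrightarrow> (\<exists>D\<ge>1. \<forall>x r R. 0 < r \<and> r \<le> R \<longrightarrow>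
     measure \<mu> (ball x R - ball x r) \<le> D * ((R - r) / R) powr \<delta> * measure \<mu> (ball x R))"

definition domain :: "'a::metric_space set \<Rightarrow> bool" where
  "domain \<Omega> \<longleftrightarrow> open \<Omega> \<and> connected \<Omega> \<and> \<Omega> \<noteq> {}"

definition admissible_radius :: "'a::metric_space set \<Rightarrow> ('a \<Rightarrow> real) \<Rightarrow> bool" where
  "admissible_radius \<Omega> \<rho> \<longleftrightarrow> continuous_on (closure \<Omega>) \<rho> \<and>
     (\<forall>x\<in>closure \<Omega>. 0 \<le> \<rho> x) \<and>
     (\<forall>x\<in>\<Omega>. 0 < \<rho> x \<and> (frontier \<Omega> \<noteq> {} \<longrightarrow> \<rho> x \<le> infdist x (frontier \<Omega>))) \<and>
     (\<forall>x\<in>closure \<Omega>. \<rho> x = 0 \<longleftrightarrow> x \<in> frontier \<Omega>)"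

definition holder_on :: "'a::metric_space set \<Rightarrow> real \<Rightarrow> ('a \<Rightarrow> real) \<Rightarrow> bool" where
  "holder_on S \<gamma> f \<longleftrightarrow> (\<exists>L>0. \<forall>x\<in>S. \<forall>y\<in>S. \<bar>f x - f y\<bar> \<le> L * dist x y powr \<gamma>)"

definition mean_op :: "'a::metric_space measure \<Rightarrow> ('a \<Rightarrow> real) \<Rightarrow> ('a \<Rightarrow> real) \<Rightarrow> 'a \<Rightarrow> real" where
  "mean_op \<mu> \<rho> u x = (1 / measure \<mu> (cball x (\<rho> x))) * (\<integral>y\<in>cball x (\<rho> x). u y \<partial>\<mu>)"

definition locally_holder :: "'a::metric_space set \<Rightarrow> real \<Rightarrow> ('a \<Rightarrow> real) \<Rightarrow> bool" where
  "locally_holder \<Omega> \<theta> u \<longleftrightarrow> (\<forall>K. compact K \<and> K \<subseteq> \<Omega> \<longrightarrow>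
     (\<exists>C. \<forall>x\<in>K. \<forall>y\<in>K. \<bar>u x - u y\<bar> \<le> C * dist x y powr \<theta>))"

end

theory Submission
  imports Defs
begin


lemma alg_bound:
  fixes a b al be C S :: real
  assumes "al > 0" "be > 0" "\<bar>a - b\<bar> \<le> C * S" "\<bar>b\<bar> \<le> C * be" "\<bar>al - be\<bar> \<le> S" "C \<ge> 0"
  shows "\<bar>(1/al) * a - (1/be) * b\<bar> \<le> 2 * C * S / al"
proof -
  have eq: "(1/al) * a - (1/be) * b = (a - b)/al + b * (be - al) / (al * be)"
    using assms(1,2) by (simp add: field_simps)
  have "\<bar>(a - b)/al\<bar> \<le> C * S / al" using assms by (simp add: divide_right_mono abs_div)
  moreover have "\<bar>b * (be - al) / (al * be)\<bar> \<le> C * S / al"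
  proof -
    have "\<bar>b * (be - al)\<bar> \<le> (C * be) * S"
      unfolding abs_mult using assms by (intro mult_mono) auto
    hence "\<bar>b * (be - al)\<bar> / (al * be) \<le> (C * be) * S / (al * be)"
      using assms by (intro divide_right_mono) auto
    also have "\<dots> = C * S / al" using assms by (simp add: field_simps)
    finally show ?thesis using assms by (simp add: abs_div abs_mult)
  qed
  ultimately have "\<bar>(a - b)/al + b * (be - al) / (al * be)\<bar> \<le> C * S / al + C * S / al"
    by (meson abs_triangle_ineq add_mono order_trans)
  also have "C * S / al + C * S / al = 2 * C * S / al" by (simp add: field_simps)
  finally show ?thesis unfolding eq .
qed

lemma mean_diff:
  fixes u :: "'a \<Rightarrow> real"
  assumes A: "A \<in> fmeasurable M" and B: "B \<in> fmeasurable M" and u: "u \<in> borel_measurable M"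
    and bd: "AE x in M. x \<in> A \<union> B \<longrightarrow> \<bar>u x\<bar> \<le> C" and C: "C \<ge> 0"
    and pA: "measure M A > 0" and pB: "measure M B > 0"
  shows "\<bar>(1/measure M A) * (\<integral>x\<in>A. u x \<partial>M) - (1/measure M B) * (\<integral>x\<in>B. u x \<partial>M)\<bar>
     \<le> 2 * C * (measure M (A - B) + measure M (B - A)) / measure M A"
proof -
  have AB: "A - B \<in> fmeasurable M" "B - A \<in> fmeasurable M" using A B by auto
  have intI: "integrable M (\<lambda>x. indicator S x *\<^sub>R u x)" if "S \<in> fmeasurable M" "S \<subseteq> A \<union> B" for S
  proof (rule Bochner_Integration.integrable_bound[where f="\<lambda>x. C * indicator S x"])
    show "integrable M (\<lambda>x. C * indicator S x :: real)"
      using that by (intro integrable_mult_right integrable_real_indicator) (auto simp: fmeasurable_def)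
    show "(\<lambda>x. indicator S x *\<^sub>R u x) \<in> borel_measurable M"
      using that u by (intro borel_measurable_scaleR borel_measurable_indicator) (auto simp: fmeasurable_def)
    show "AE x in M. norm (indicator S x *\<^sub>R u x) \<le> norm (C * indicator S x)"
      using bd by eventually_elim (use that C in \<open>auto simp: indicator_def\<close>)
  qed
  have iA: "integrable M (\<lambda>x. indicator A x *\<^sub>R u x)" and iB: "integrable M (\<lambda>x. indicator B x *\<^sub>R u x)"
    using intI A B by auto
  let ?S = "measure M (A - B) + measure M (B - A)"
  have d1: "\<bar>(\<integral>x\<in>A. u x \<partial>M) - (\<integral>x\<in>B. u x \<partial>M)\<bar> \<le> C * ?S"
  proof -
    have "(\<integral>x\<in>A. u x \<partial>M) - (\<integral>x\<in>B. u x \<partial>M) = (\<integral>x. indicator A x *\<^sub>R u x - indicator B x *\<^sub>R u x \<partial>M)"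
      unfolding set_lebesgue_integral_def using iA iB by simp
    also have "\<bar>\<dots>\<bar> \<le> (\<integral>x. \<bar>indicator A x *\<^sub>R u x - indicator B x *\<^sub>R u x\<bar> \<partial>M)"
      by (rule integral_abs_bound)
    also have "\<dots> \<le> (\<integral>x. C * indicator (A - B) x + C * indicator (B - A) x \<partial>M)"
    proof (rule integral_mono_AE)
      show "integrable M (\<lambda>x. \<bar>indicator A x *\<^sub>R u x - indicator B x *\<^sub>R u x\<bar>)"
        using iA iB by auto
      show "integrable M (\<lambda>x. C * indicator (A - B) x + C * indicator (B - A) x :: real)"
        using AB by (intro Bochner_Integration.integrable_add integrable_mult_right integrable_real_indicator) (auto simp: fmeasurable_def)
      show "AE x in M. \<bar>indicator A x *\<^sub>R u x - indicator B x *\<^sub>R u x\<bar> \<le> C * indicator (A - B) x + C * indicator (B - A) x"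
        using bd by eventually_elim (use C in \<open>auto simp: indicator_def\<close>)
    qed
    also have "\<dots> = C * ?S"
      using AB by (subst Bochner_Integration.integral_add) (auto simp: fmeasurable_def distrib_left)
    finally show ?thesis .
  qed
  have d2: "\<bar>(\<integral>x\<in>B. u x \<partial>M)\<bar> \<le> C * measure M B"
  proof -
    have "\<bar>(\<integral>x\<in>B. u x \<partial>M)\<bar> \<le> (\<integral>x. \<bar>indicator B x *\<^sub>R u x\<bar> \<partial>M)"
      unfolding set_lebesgue_integral_def by (rule integral_abs_bound)
    also have "\<dots> \<le> (\<integral>x. C * indicator B x \<partial>M)"
    proof (rule integral_mono_AE)
      show "integrable M (\<lambda>x. \<bar>indicator B x *\<^sub>R u x\<bar>)" using iB by auto
      show "integrable M (\<lambda>x. C * indicator B x :: real)"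
        using B by (intro integrable_mult_right integrable_real_indicator) (auto simp: fmeasurable_def)
      show "AE x in M. \<bar>indicator B x *\<^sub>R u x\<bar> \<le> C * indicator B x"
        using bd by eventually_elim (use C in \<open>auto simp: indicator_def\<close>)
    qed
    also have "\<dots> = C * measure M B" using B by (simp add: fmeasurable_def)
    finally show ?thesis .
  qed
  have d3: "\<bar>measure M A - measure M B\<bar> \<le> ?S"
  proof -
    have e1: "A - A \<inter> B = A - B" "B - A \<inter> B = B - A" "A \<inter> B \<union> A = A" "A \<inter> B \<union> B = B" by auto
    have "measure M A = measure M (A \<inter> B) + measure M (A - B)"
      using measure_Un2[of "A \<inter> B" M A] A B fmeasurable.Int[OF A B]
      by (simp only: e1)
    moreover have "measure M B = measure M (A \<inter> B) + measure M (B - A)"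
      using measure_Un2[of "A \<inter> B" M B] A B fmeasurable.Int[OF A B]
      by (simp only: e1)
    ultimately show ?thesis using measure_nonneg[of M "A - B"] measure_nonneg[of M "B - A"] by linarith
  qed
  show ?thesis by (rule alg_bound[OF pA pB d1 d2 d3 C])
qed



lemma ball_fm: assumes "metric_measure_space \<mu>" shows "ball x r \<in> fmeasurable \<mu>"
proof (cases "r > 0")
  case True
  then show ?thesis using assms unfolding metric_measure_space_def fmeasurable_def
    by (auto intro: borel_open)
next
  case False
  then have "ball x r = {}" by auto
  then show ?thesis by (simp only:) (simp add: fmeasurable_def)
qed

lemma cball_fm: assumes "metric_measure_space \<mu>" shows "cball x r \<in> fmeasurable \<mu>"
proof -
  have s: "cball x r \<in> sets \<mu>" using assms unfolding metric_measure_space_def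
    by (auto intro: borel_closed)
  have "cball x r \<subseteq> ball x (\<bar>r\<bar> + 1)" by auto
  hence "emeasure \<mu> (cball x r) \<le> emeasure \<mu> (ball x (\<bar>r\<bar> + 1))"
    using ball_fm[OF assms] by (intro emeasure_mono) (auto simp: fmeasurable_def)
  also have "\<dots> < \<infinity>" using ball_fm[OF assms] by (auto simp: fmeasurable_def)
  finally show ?thesis using s by (auto simp: fmeasurable_def)
qed

lemma ball_pos: assumes "metric_measure_space \<mu>" "r > 0" shows "measure \<mu> (ball x r) > 0"
proof -
  have "0 < emeasure \<mu> (ball x r)" using assms unfolding metric_measure_space_def by auto
  also have "emeasure \<mu> (ball x r) = ennreal (measure \<mu> (ball x r))"
    using emeasure_eq_measure2[OF ball_fm[OF assms(1)]] .
  finally show ?thesis by simp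
qed

lemma cball_pos: assumes "metric_measure_space \<mu>" "r > 0" shows "measure \<mu> (cball x r) > 0"
proof -
  have "measure \<mu> (ball x r) \<le> measure \<mu> (cball x r)"
    using ball_fm[OF assms(1)] cball_fm[OF assms(1)]
    by (intro measure_mono_fmeasurable) (auto simp: fmeasurable_def)
  thus ?thesis using ball_pos[OF assms, where x=x] by linarith
qed

lemma dbl:
  assumes mms: "metric_measure_space \<mu>"
    and ann: "\<forall>x r R. 0 < r \<and> r \<le> R \<longrightarrow>
     measure \<mu> (ball x R - ball x r) \<le> D * ((R - r) / R) powr \<delta> * measure \<mu> (ball x R)"
    and r: "r > 0" and s: "s \<ge> 0" and h: "D * (s / (r + s)) powr \<delta> \<le> 1/2"
  shows "measure \<mu> (ball z (r + s)) \<le> 2 * measure \<mu> (ball z r)"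
proof -
  have "measure \<mu> (ball z (r + s) - ball z r) = measure \<mu> (ball z (r + s)) - measure \<mu> (ball z r)"
    using ball_fm[OF mms, of z "r + s"] ball_fm[OF mms, of z r] s
    by (intro measure_Diff) (auto simp: fmeasurable_def)
  moreover have "measure \<mu> (ball z (r + s) - ball z r) \<le> D * (s / (r + s)) powr \<delta> * measure \<mu> (ball z (r + s))"
    using ann[rule_format, of r "r + s" z] r s by simp
  moreover have "D * (s / (r + s)) powr \<delta> * measure \<mu> (ball z (r + s)) \<le> 1/2 * measure \<mu> (ball z (r + s))"
    using h by (intro mult_right_mono) auto
  ultimately show ?thesis by linarith
qed



lemma key:
  fixes u :: "'a::metric_space \<Rightarrow> real"
  assumes mms: "metric_measure_space \<mu>"
    and ann: "\<forall>x r R. 0 < r \<and> r \<le> R \<longrightarrow>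
     measure \<mu> (ball x R - ball x r) \<le> D * ((R - r) / R) powr \<delta> * measure \<mu> (ball x R)"
    and D: "D \<ge> 1" and dl: "\<delta> > 0"
    and m: "m > 0" and rx: "rx \<ge> m" and ry: "ry \<ge> m" and e: "e > 0" "2 * e < m"
    and de: "dist x y + \<bar>rx - ry\<bar> \<le> e"
    and q: "D * (2 * e / m) powr \<delta> \<le> 1/2"
    and u: "u \<in> borel_measurable \<mu>"
    and bd: "AE z in \<mu>. z \<in> cball x rx \<union> cball y ry \<longrightarrow> \<bar>u z\<bar> \<le> C" and C: "C \<ge> 0"
  shows "\<bar>(1/measure \<mu> (cball x rx)) * (\<integral>z\<in>cball x rx. u z \<partial>\<mu>)
          - (1/measure \<mu> (cball y ry)) * (\<integral>z\<in>cball y ry. u z \<partial>\<mu>)\<bar>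
     \<le> 8 * C * D * (2 * e / m) powr \<delta>"
proof -
  define q where "q = (2 * e / m) powr \<delta>"
  have q0: "q \<ge> 0" unfolding q_def by simp
  have Dq: "D * q \<le> 1/2" using q unfolding q_def .
  have fmb: "\<And>z r. ball z r \<in> fmeasurable \<mu>" using ball_fm[OF mms] .
  have fmc: "\<And>z r. cball z r \<in> fmeasurable \<mu>" using cball_fm[OF mms] .
  have rat: "(s / (r + s)) powr \<delta> \<le> q" if "r \<ge> m" "0 \<le> s" "s \<le> 2 * e" for r s
  proof -
    have "s / (r + s) \<le> 2 * e / m"
    proof -
      have "s / (r + s) \<le> s / m" using that m by (intro divide_left_mono) auto
      also have "\<dots> \<le> 2 * e / m" using that m by (intro divide_right_mono) auto
      finally show ?thesis .
    qed
    thus ?thesis unfolding q_def using that m dl by (intro powr_mono2) auto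
  qed
  have dblx: "measure \<mu> (ball x (rx + 2 * e)) \<le> 2 * measure \<mu> (ball x rx)"
  proof (rule dbl[OF mms ann])
    show "D * (2 * e / (rx + 2 * e)) powr \<delta> \<le> 1/2"
      using rat[of rx "2 * e"] rx e D Dq by (smt (verit) mult_left_mono)
  qed (use rx m e in auto)
  have bx: "measure \<mu> (ball x rx) \<le> measure \<mu> (cball x rx)"
    using fmb fmc by (intro measure_mono_fmeasurable) (auto simp: fmeasurable_def)
  have bigx: "measure \<mu> (ball x (rx + 2 * e)) \<le> 2 * measure \<mu> (cball x rx)"
    using dblx bx by linarith
  have ann2: "measure \<mu> (ball z (r + e) - ball z (r - e)) \<le> D * q * measure \<mu> (ball z (r + e))"
    if "r \<ge> m" for z r
  proof -
    have "measure \<mu> (ball z (r + e) - ball z (r - e)) \<le> D * (((r + e) - (r - e)) / (r + e)) powr \<delta> * measure \<mu> (ball z (r + e))"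
      using ann[rule_format, of "r - e" "r + e" z] that e by auto
    also have "((r + e) - (r - e)) / (r + e) = (2 * e) / ((r - e) + 2 * e)" by simp
    also have "D * ((2 * e) / ((r - e) + 2 * e)) powr \<delta> \<le> D * q"
    proof -
      have "((2 * e) / (r + e)) powr \<delta> \<le> q"
      proof -
        have "(2 * e) / (r + e) \<le> 2 * e / m" using that e m by (intro divide_left_mono) auto
        thus ?thesis unfolding q_def using e m dl that by (intro powr_mono2) auto
      qed
      thus ?thesis using D by (intro mult_left_mono) (auto simp: add.commute)
    qed
    hence "D * ((2 * e) / ((r - e) + 2 * e)) powr \<delta> * measure \<mu> (ball z (r + e)) \<le> D * q * measure \<mu> (ball z (r + e))"
      by (intro mult_right_mono) auto
    finally show ?thesis .
  qed
  have S1: "measure \<mu> (cball x rx - cball y ry) \<le> 2 * D * q * measure \<mu> (cball x rx)"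
  proof -
    have sub: "cball x rx - cball y ry \<subseteq> ball x (rx + e) - ball x (rx - e)"
    proof
      fix z assume z: "z \<in> cball x rx - cball y ry"
      hence "dist x z \<le> rx" "dist y z > ry" by auto
      moreover have "dist y z \<le> dist x y + dist x z" by (metis dist_commute dist_triangle)
      ultimately show "z \<in> ball x (rx + e) - ball x (rx - e)" using de e by auto
    qed
    have "measure \<mu> (cball x rx - cball y ry) \<le> measure \<mu> (ball x (rx + e) - ball x (rx - e))"
      by (intro measure_mono_fmeasurable[OF sub]) (simp_all add: fmeasurable.Diff fmb fmc fmeasurableD)
    also have "\<dots> \<le> D * q * measure \<mu> (ball x (rx + e))" using ann2 rx by auto
    also have "\<dots> \<le> D * q * measure \<mu> (ball x (rx + 2 * e))"
      using fmb e D q0 by (intro mult_left_mono measure_mono_fmeasurable) (auto simp: fmeasurable_def)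
    also have "\<dots> \<le> D * q * (2 * measure \<mu> (cball x rx))"
      using bigx D q0 by (intro mult_left_mono) auto
    finally show ?thesis by simp
  qed
  have S2: "measure \<mu> (cball y ry - cball x rx) \<le> 2 * D * q * measure \<mu> (cball x rx)"
  proof -
    have sub: "cball y ry - cball x rx \<subseteq> ball y (ry + e) - ball y (ry - e)"
    proof
      fix z assume z: "z \<in> cball y ry - cball x rx"
      hence "dist y z \<le> ry" "dist x z > rx" by auto
      moreover have "dist x z \<le> dist x y + dist y z" by (rule dist_triangle)
      ultimately show "z \<in> ball y (ry + e) - ball y (ry - e)" using de e by auto
    qed
    have sub2: "ball y (ry + e) \<subseteq> ball x (rx + 2 * e)"
    proof
      fix z assume "z \<in> ball y (ry + e)"
      hence "dist y z < ry + e" by auto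
      moreover have "dist x z \<le> dist x y + dist y z" by (rule dist_triangle)
      ultimately show "z \<in> ball x (rx + 2 * e)" using de by auto
    qed
    have "measure \<mu> (cball y ry - cball x rx) \<le> measure \<mu> (ball y (ry + e) - ball y (ry - e))"
      by (intro measure_mono_fmeasurable[OF sub]) (simp_all add: fmeasurable.Diff fmb fmc fmeasurableD)
    also have "\<dots> \<le> D * q * measure \<mu> (ball y (ry + e))" using ann2 ry by auto
    also have "\<dots> \<le> D * q * measure \<mu> (ball x (rx + 2 * e))"
      using fmb sub2 D q0 by (intro mult_left_mono measure_mono_fmeasurable) (auto simp: fmeasurable_def)
    also have "\<dots> \<le> D * q * (2 * measure \<mu> (cball x rx))"
      using bigx D q0 by (intro mult_left_mono) auto
    finally show ?thesis by simp
  qed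
  have pA: "measure \<mu> (cball x rx) > 0" using cball_pos[OF mms] rx m by auto
  have pB: "measure \<mu> (cball y ry) > 0" using cball_pos[OF mms] ry m by auto
  have "\<bar>(1/measure \<mu> (cball x rx)) * (\<integral>z\<in>cball x rx. u z \<partial>\<mu>)
          - (1/measure \<mu> (cball y ry)) * (\<integral>z\<in>cball y ry. u z \<partial>\<mu>)\<bar>
     \<le> 2 * C * (measure \<mu> (cball x rx - cball y ry) + measure \<mu> (cball y ry - cball x rx)) / measure \<mu> (cball x rx)"
    by (rule mean_diff[OF fmc fmc u bd C pA pB])
  also have "\<dots> \<le> 2 * C * (4 * D * q * measure \<mu> (cball x rx)) / measure \<mu> (cball x rx)"
    using S1 S2 C pA by (intro divide_right_mono mult_left_mono) auto
  also have "\<dots> = 8 * C * D * q" using pA by (simp add: field_simps)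
  finally show ?thesis unfolding q_def .
qed



lemma mean_bound:
  fixes u :: "'a \<Rightarrow> real"
  assumes A: "A \<in> fmeasurable M" and u: "u \<in> borel_measurable M"
    and bd: "AE x in M. x \<in> A \<longrightarrow> \<bar>u x\<bar> \<le> C" and C: "C \<ge> 0" and pA: "measure M A > 0"
  shows "\<bar>(1/measure M A) * (\<integral>x\<in>A. u x \<partial>M)\<bar> \<le> C"
proof -
  have iA: "integrable M (\<lambda>x. indicator A x *\<^sub>R u x)"
  proof (rule Bochner_Integration.integrable_bound[where f="\<lambda>x. C * indicator A x"])
    show "integrable M (\<lambda>x. C * indicator A x :: real)"
      using A by (intro integrable_mult_right integrable_real_indicator) (auto simp: fmeasurable_def)
    show "(\<lambda>x. indicator A x *\<^sub>R u x) \<in> borel_measurable M"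
      using A u by (intro borel_measurable_scaleR borel_measurable_indicator) (auto simp: fmeasurable_def)
    show "AE x in M. norm (indicator A x *\<^sub>R u x) \<le> norm (C * indicator A x)"
      using bd by eventually_elim (use C in \<open>auto simp: indicator_def\<close>)
  qed
  have "\<bar>(\<integral>x\<in>A. u x \<partial>M)\<bar> \<le> (\<integral>x. \<bar>indicator A x *\<^sub>R u x\<bar> \<partial>M)"
    unfolding set_lebesgue_integral_def by (rule integral_abs_bound)
  also have "\<dots> \<le> (\<integral>x. C * indicator A x \<partial>M)"
  proof (rule integral_mono_AE)
    show "integrable M (\<lambda>x. \<bar>indicator A x *\<^sub>R u x\<bar>)" using iA by auto
    show "integrable M (\<lambda>x. C * indicator A x :: real)"
      using A by (intro integrable_mult_right integrable_real_indicator) (auto simp: fmeasurable_def)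
    show "AE x in M. \<bar>indicator A x *\<^sub>R u x\<bar> \<le> C * indicator A x"
      using bd by eventually_elim (use C in \<open>auto simp: indicator_def\<close>)
  qed
  also have "\<dots> = C * measure M A" using A by (simp add: fmeasurable_def)
  finally have "\<bar>(\<integral>x\<in>A. u x \<partial>M)\<bar> \<le> C * measure M A" .
  hence "\<bar>(\<integral>x\<in>A. u x \<partial>M)\<bar> / measure M A \<le> C" using pA by (simp add: divide_le_eq)
  thus ?thesis by (simp add: abs_mult)
qed

theorem corollary3p11:
  fixes \<mu> :: "'a::metric_space measure" and \<Omega> :: "'a set" and \<rho> u :: "'a \<Rightarrow> real"
    and \<delta> \<gamma> :: real
  assumes "proper_space TYPE('a)"
    and "metric_measure_space \<mu>"
    and "0 < \<delta>" "\<delta> \<le> 1" "annular_decay \<mu> \<delta>"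
    and "0 < \<gamma>" "\<gamma> \<le> 1"
    and "domain \<Omega>" "bounded \<Omega>"
    and "admissible_radius \<Omega> \<rho>" "holder_on (closure \<Omega>) \<gamma> \<rho>"
    and "u \<in> borel_measurable \<mu>"
    and "\<exists>C. AE x in \<mu>. x \<in> \<Omega> \<union> (\<Union>z\<in>\<Omega>. cball z (\<rho> z)) \<longrightarrow> \<bar>u x\<bar> \<le> C"
    and "\<forall>x\<in>\<Omega>. mean_op \<mu> \<rho> u x = u x"
  shows "locally_holder \<Omega> (\<gamma> * \<delta>) u"
proof -
  note mms = assms(2) and dl = assms(3) and gm = assms(6,7) and umeas = assms(12)
  obtain D where D: "D \<ge> 1" and ann: "\<forall>x r R. 0 < r \<and> r \<le> R \<longrightarrow>
     measure \<mu> (ball x R - ball x r) \<le> D * ((R - r) / R) powr \<delta> * measure \<mu> (ball x R)"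
    using assms(5) unfolding annular_decay_def by blast
  obtain L where L: "L > 0" and hol: "\<forall>x\<in>closure \<Omega>. \<forall>y\<in>closure \<Omega>. \<bar>\<rho> x - \<rho> y\<bar> \<le> L * dist x y powr \<gamma>"
    using assms(11) unfolding holder_on_def by blast
  obtain C where C: "AE x in \<mu>. x \<in> \<Omega> \<union> (\<Union>z\<in>\<Omega>. cball z (\<rho> z)) \<longrightarrow> \<bar>u x\<bar> \<le> C"
    using assms(13) by blast
  define C0 where "C0 = max C 0"
  have C0: "C0 \<ge> 0" unfolding C0_def by simp
  have AE0: "AE x in \<mu>. x \<in> \<Omega> \<union> (\<Union>z\<in>\<Omega>. cball z (\<rho> z)) \<longrightarrow> \<bar>u x\<bar> \<le> C0"
    using C by eventually_elim (auto simp: C0_def)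
  have rcont: "continuous_on (closure \<Omega>) \<rho>" and rpos: "\<And>x. x \<in> \<Omega> \<Longrightarrow> 0 < \<rho> x"
    using assms(10) unfolding admissible_radius_def by auto
  have mean: "\<And>x. x \<in> \<Omega> \<Longrightarrow> u x = (1 / measure \<mu> (cball x (\<rho> x))) * (\<integral>y\<in>cball x (\<rho> x). u y \<partial>\<mu>)"
    using assms(14) unfolding mean_op_def by auto
  have AEx: "AE z in \<mu>. z \<in> cball x (\<rho> x) \<union> cball y (\<rho> y) \<longrightarrow> \<bar>u z\<bar> \<le> C0"
    if "x \<in> \<Omega>" "y \<in> \<Omega>" for x y
    using AE0 by eventually_elim (use that in blast)
  have ubd: "\<bar>u x\<bar> \<le> C0" if x: "x \<in> \<Omega>" for x
  proof -
    have "AE z in \<mu>. z \<in> cball x (\<rho> x) \<longrightarrow> \<bar>u z\<bar> \<le> C0"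
      using AEx[OF x x] by eventually_elim auto
    thus ?thesis unfolding mean[OF x]
      using cball_fm[OF mms] cball_pos[OF mms] rpos[OF x] umeas C0 by (intro mean_bound) auto
  qed
  show ?thesis unfolding locally_holder_def
  proof (intro allI impI)
    fix K assume K: "compact K \<and> K \<subseteq> \<Omega>"
    show "\<exists>Cf. \<forall>x\<in>K. \<forall>y\<in>K. \<bar>u x - u y\<bar> \<le> Cf * dist x y powr (\<gamma> * \<delta>)"
    proof (cases "K = {}")
      case True then show ?thesis by auto
    next
      case False
      have "K \<subseteq> closure \<Omega>" using K closure_subset by blast
      then obtain x0 where x0: "x0 \<in> K" and x0min: "\<forall>y\<in>K. \<rho> x0 \<le> \<rho> y"
        using continuous_attains_inf[OF _ False continuous_on_subset[OF rcont]] K by blast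
      define m where "m = \<rho> x0"
      have m: "m > 0" unfolding m_def using rpos x0 K by auto
      define t where "t = (1 / (2 * D)) powr (1 / \<delta>)"
      have t: "t > 0" unfolding t_def using D by simp
      define \<eta> where "\<eta> = m / 2 * min (1/2) t"
      have eta: "\<eta> > 0" unfolding \<eta>_def using m t by simp
      have eta2: "2 * \<eta> < m" unfolding \<eta>_def using m t by (simp add: min_def)
      have etaq: "D * (2 * \<eta> / m) powr \<delta> \<le> 1/2"
      proof -
        have "2 * \<eta> / m = min (1/2) t" unfolding \<eta>_def using m by simp
        hence "(2 * \<eta> / m) powr \<delta> \<le> t powr \<delta>" using t dl by (intro powr_mono2) auto
        also have "t powr \<delta> = 1 / (2 * D)" unfolding t_def using dl D by (simp add: powr_powr)
        finally show ?thesis using D by (simp add: field_simps)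
      qed
      define d0 where "d0 = min 1 ((\<eta> / (1 + L)) powr (1 / \<gamma>))"
      have d0: "d0 > 0" "d0 \<le> 1" unfolding d0_def using eta L by auto
      define \<theta> where "\<theta> = \<gamma> * \<delta>"
      have th: "\<theta> > 0" unfolding \<theta>_def using gm dl by simp
      define C1 where "C1 = 8 * C0 * D * (2 * (1 + L) / m) powr \<delta>"
      define C2 where "C2 = 2 * C0 / d0 powr \<theta>"
      have C1: "C1 \<ge> 0" and C2: "C2 \<ge> 0" unfolding C1_def C2_def using C0 D by auto
      have main: "\<bar>u x - u y\<bar> \<le> max C1 C2 * dist x y powr \<theta>" if x: "x \<in> K" and y: "y \<in> K" for x y
      proof (cases "dist x y \<le> d0")
        case near: True
        show ?thesis
        proof (cases "x = y")
          case True then show ?thesis by simp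
        next
          case False
          define d where "d = dist x y"
          have dpos: "d > 0" unfolding d_def using False by simp
          define e where "e = (1 + L) * d powr \<gamma>"
          have e: "e > 0" unfolding e_def using dpos L by simp
          have xO: "x \<in> \<Omega>" and yO: "y \<in> \<Omega>" using x y K by auto
          have "\<bar>\<rho> x - \<rho> y\<bar> \<le> L * d powr \<gamma>"
            unfolding d_def using hol xO yO closure_subset by blast
          moreover have "d \<le> d powr \<gamma>"
          proof -
            have "d powr 1 \<le> d powr \<gamma>" using powr_mono'[of \<gamma> 1 d] gm dpos near d0 unfolding d_def by auto
            thus ?thesis using dpos by simp
          qed
          ultimately have de: "dist x y + \<bar>\<rho> x - \<rho> y\<bar> \<le> e" unfolding e_def d_def by (simp add: algebra_simps)
          have "d powr \<gamma> \<le> d0 powr \<gamma>" using near dpos gm unfolding d_def by (intro powr_mono2) auto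
          also have "\<dots> \<le> ((\<eta> / (1 + L)) powr (1 / \<gamma>)) powr \<gamma>"
            using d0 gm unfolding d0_def by (intro powr_mono2) auto
          also have "\<dots> = \<eta> / (1 + L)" using gm eta L by (simp add: powr_powr)
          finally have "e \<le> \<eta>" unfolding e_def using L by (simp add: field_simps)
          hence e2: "2 * e < m" using eta2 by linarith
          have eq: "D * (2 * e / m) powr \<delta> \<le> 1/2"
          proof -
            have "(2 * e / m) powr \<delta> \<le> (2 * \<eta> / m) powr \<delta>"
              using \<open>e \<le> \<eta>\<close> e m dl by (intro powr_mono2 divide_right_mono) auto
            thus ?thesis using etaq D by (smt (verit) mult_left_mono)
          qed
          have "\<bar>u x - u y\<bar> \<le> 8 * C0 * D * (2 * e / m) powr \<delta>"
            unfolding mean[OF xO] mean[OF yO]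
            using key[OF mms ann D dl m _ _ e e2 de eq umeas AEx[OF xO yO] C0] x0min x y
            unfolding m_def by blast
          also have "(2 * e / m) powr \<delta> = (2 * (1 + L) / m) powr \<delta> * d powr \<theta>"
          proof -
            have "2 * e / m = (2 * (1 + L) / m) * d powr \<gamma>" unfolding e_def by simp
            hence "(2 * e / m) powr \<delta> = (2 * (1 + L) / m) powr \<delta> * (d powr \<gamma>) powr \<delta>"
              by (simp only: powr_mult)
            thus ?thesis unfolding \<theta>_def by (simp add: powr_powr)
          qed
          also have "8 * C0 * D * ((2 * (1 + L) / m) powr \<delta> * d powr \<theta>) = C1 * d powr \<theta>"
            unfolding C1_def by simp
          also have "\<dots> \<le> max C1 C2 * d powr \<theta>" by (intro mult_right_mono) auto
          finally show ?thesis unfolding d_def .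
        qed
      next
        case far: False
        have xO: "x \<in> \<Omega>" and yO: "y \<in> \<Omega>" using x y K by auto
        have "\<bar>u x - u y\<bar> \<le> 2 * C0" using ubd[OF xO] ubd[OF yO] by linarith
        also have "2 * C0 = C2 * d0 powr \<theta>" unfolding C2_def using d0 by simp
        also have "\<dots> \<le> C2 * dist x y powr \<theta>"
          using far d0 th C2 by (intro mult_left_mono powr_mono2) auto
        also have "\<dots> \<le> max C1 C2 * dist x y powr \<theta>" by (intro mult_right_mono) auto
        finally show ?thesis .
      qed
      show ?thesis using main unfolding \<theta>_def by blast
    qed
  qed
qed

end
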